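(* Let $(\mathcal{S},d_{\mathcal{S}})$ and $(\mathcal{A},d_{\mathcal{A}})$ be metric spaces, $\gamma\in[0,1)$, and $\rho$ an initial state distribution on $\mathcal{S}$. Let $(\pi,p)$ and $(\pi',p')$ be two policy-configuration pairs such that $\pi'$ is $L_{\pi'}$-LC and $p'$ is $L_{p'}$-LC. If $\gamma L_{p'}(1+L_{\pi'})<1$, then $$\mathcal{W}\big(\mu_{\pi',p'},\mu_{\pi,p}\big)\le \frac{\gamma}{1-\gamma L_{p'}(1+L_{\pi'})}\int_{\mathcal{S}}\mu_{\pi,p}(ds)\,\mathcal{W}\big(p'_{\pi'}(\cdot|s),p_{\pi}(\cdot|s)\big).$$
   Context: A configuration is a Markov kernel $p$ assigning to each $(s,a)\in\mathcal{S}\times\mathcal{A}$ a probability measure $p(\cdot|s,a)$ on $\mathcal{S}$; a policy is a Markov kernel $\pi$ assigning to each $s$ a probability measure $\pi(\cdot|s)$ on $\mathcal{A}$. The state-state kernel is $p_\pi(ds'|s)=\int_{\mathcal{A}}\pi(da|s)p(ds'|s,a)$. The $\gamma$-discounted stationary distribution is $\mu_{\pi,p}=(1-\gamma)\sum_{t\ge0}\gamma^t\rho\, p_\pi^t$, equivalently the solution of $\mu_{\pi,p}=(1-\gamma)\rho+\gamma\,\mu_{\pi,p}p_\pi$. For probability measures $\mu,\nu$ on a metric space, $\mathcal{W}(\mu,\nu)=\sup_{\|f\|_L\le1}|\int f\,d(\mu-\nu)|$, where $\|f\|_L$ is the Lipschitz semi-norm. Product metrics are sums: $d_{\mathcal{S}\times\mathcal{A}}((s,a),(\bar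 s,\bar a))=d_{\mathcal{S}}(s,\bar s)+d_{\mathcal{A}}(a,\bar a)$. $p'$ is $L_{p'}$-LC if $\mathcal{W}(p'(\cdot|s,a),p'(\cdot|\bar s,\bar a))\le L_{p'}d_{\mathcal{S}\times\mathcal{A}}((s,a),(\bar s,\bar a))$ for all pairs; $\pi'$ is $L_{\pi'}$-LC if $\mathcal{W}(\pi'(\cdot|s),\pi'(\cdot|\bar s))\le L_{\pi'}d_{\mathcal{S}}(s,\bar s)$ for all $s,\bar s$. *)

theory Defs
  imports "HOL-Probability.Probability"
begin

text \<open>Wasserstein-1 (Kantorovich--Rubinstein) distance: supremum over 1-Lipschitz
  real functions of the difference of integrals.  Only functions integrable w.r.t. both
  measures are used (for measures with finite first moment this is every 1-Lipschitz
  function).\<close>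
definition wass :: "'s::metric_space measure \<Rightarrow> 's measure \<Rightarrow> ennreal" where
  "wass \<mu> \<nu> = (SUP f \<in> {f :: 's \<Rightarrow> real. 1-lipschitz_on UNIV f \<and> integrable \<mu> f \<and> integrable \<nu> f}.
                  ennreal \<bar>(\<integral>x. f x \<partial>\<mu>) - (\<integral>x. f x \<partial>\<nu>)\<bar>)"

definition state_kernel :: "('s \<Rightarrow> 'a \<Rightarrow> 's measure) \<Rightarrow> ('s \<Rightarrow> 'a measure) \<Rightarrow> 's \<Rightarrow> 's measure" where
  "state_kernel p \<pi> s = (\<pi> s \<bind> (\<lambda>a. p s a))"

primrec state_dist :: "'s measure \<Rightarrow> ('s \<Rightarrow> 's measure) \<Rightarrow> nat \<Rightarrow> 's measure" where
  "state_dist \<rho> P 0 = \<rho>"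
| "state_dist \<rho> P (Suc t) = (state_dist \<rho> P t \<bind> P)"

definition disc_dist :: "real \<Rightarrow> 's measure \<Rightarrow> ('s \<Rightarrow> 's measure) \<Rightarrow> 's measure" where
  "disc_dist \<gamma> \<rho> P = measure_of (space \<rho>) (sets \<rho>)
     (\<lambda>A. \<Sum>t. ennreal ((1 - \<gamma>) * \<gamma> ^ t) * emeasure (state_dist \<rho> P t) A)"

text \<open>Lipschitz continuity of kernels, product metric = sum of metrics.\<close>
definition config_LC :: "real \<Rightarrow> ('s::metric_space \<Rightarrow> 'a::metric_space \<Rightarrow> 's measure) \<Rightarrow> bool" where
  "config_LC L p \<longleftrightarrow> (\<forall>s a s' a'. wass (p s a) (p s' a') \<le> ennreal (L * (dist s s' + dist a a')))"

definition policy_LC :: "real \<Rightarrow> ('s::metric_space \<Rightarrow> 'a::metric_space measure) \<Rightarrow> bool" where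
  "policy_LC L \<pi> \<longleftrightarrow> (\<forall>s s'. wass (\<pi> s) (\<pi> s') \<le> ennreal (L * dist s s'))"

end

theory Submission
  imports Defs
begin

lemma lip_meas: "L-lipschitz_on UNIV (g::'x::metric_space \<Rightarrow> real) \<Longrightarrow> g \<in> borel_measurable borel"
  by (intro borel_measurable_continuous_onI lipschitz_on_continuous_on)

lemma integral_bind_gen:
  fixes f :: "'b \<Rightarrow> real"
  assumes N: "N \<in> M \<rightarrow>\<^sub>M subprob_algebra B"
    and f[measurable]: "f \<in> borel_measurable B"
    and int: "integrable (M \<bind> N) f"
  shows "AE x in M. integrable (N x) f"
    and "integrable M (\<lambda>x. \<integral>y. f y \<partial>N x)"
    and "(\<integral>y. f y \<partial>(M \<bind> N)) = (\<integral>x. (\<integral>y. f y \<partial>N x) \<partial>M)"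
proof -
  define P where "P x = (\<integral>\<^sup>+y. ennreal (f y) \<partial>N x)" for x
  define Q where "Q x = (\<integral>\<^sup>+y. ennreal (- f y) \<partial>N x)" for x
  have Pm[measurable]: "P \<in> borel_measurable M" unfolding P_def
    using measurable_compose[OF N nn_integral_measurable_subprob_algebra, of "\<lambda>y. ennreal (f y)"] by simp
  have Qm[measurable]: "Q \<in> borel_measurable M" unfolding Q_def
    using measurable_compose[OF N nn_integral_measurable_subprob_algebra, of "\<lambda>y. ennreal (- f y)"] by simp
  have IP: "(\<integral>\<^sup>+x. P x \<partial>M) \<noteq> \<infinity>"
    using integrableD(2)[OF int] nn_integral_bind[OF _ N, of "\<lambda>y. ennreal (f y)"] by (simp add: P_def)
  have IQ: "(\<integral>\<^sup>+x. Q x \<partial>M) \<noteq> \<infinity>"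
    using integrableD(3)[OF int] nn_integral_bind[OF _ N, of "\<lambda>y. ennreal (- f y)"] by (simp add: Q_def)
  have AP: "AE x in M. P x \<noteq> \<infinity>" by (rule nn_integral_PInf_AE[OF Pm IP])
  have AQ: "AE x in M. Q x \<noteq> \<infinity>" by (rule nn_integral_PInf_AE[OF Qm IQ])
  have fm: "x \<in> space M \<Longrightarrow> f \<in> borel_measurable (N x)" for x
    using sets_kernel[OF N] by (simp cong: measurable_cong_sets)
  show AI: "AE x in M. integrable (N x) f"
    using AP AQ AE_space by eventually_elim (auto simp: real_integrable_def P_def Q_def fm)
  have eq1: "integrable (N x) f \<Longrightarrow> (\<integral>y. f y \<partial>N x) = enn2real (P x) - enn2real (Q x)" for x
    unfolding P_def Q_def by (rule real_lebesgue_integral_def)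
  have eq: "AE x in M. (\<integral>y. f y \<partial>N x) = enn2real (P x) - enn2real (Q x)"
    using AI by (rule AE_mp) (intro AE_I2 impI eq1)
  have iP: "integrable M (\<lambda>x. enn2real (P x))"
  proof (intro integrableI_nonneg)
    have "(\<integral>\<^sup>+x. ennreal (enn2real (P x)) \<partial>M) \<le> (\<integral>\<^sup>+x. P x \<partial>M)"
      by (intro nn_integral_mono) (simp add: ennreal_enn2real_if)
    also have "\<dots> < \<infinity>" using IP by (simp add: less_top)
    finally show "(\<integral>\<^sup>+x. ennreal (enn2real (P x)) \<partial>M) < \<infinity>" .
  qed auto
  have iQ: "integrable M (\<lambda>x. enn2real (Q x))"
  proof (intro integrableI_nonneg)
    have "(\<integral>\<^sup>+x. ennreal (enn2real (Q x)) \<partial>M) \<le> (\<integral>\<^sup>+x. Q x \<partial>M)"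
      by (intro nn_integral_mono) (simp add: ennreal_enn2real_if)
    also have "\<dots> < \<infinity>" using IQ by (simp add: less_top)
    finally show "(\<integral>\<^sup>+x. ennreal (enn2real (Q x)) \<partial>M) < \<infinity>" .
  qed auto
  have iPQ: "integrable M (\<lambda>x. enn2real (P x) - enn2real (Q x))" using iP iQ by auto
  have mI: "(\<lambda>x. \<integral>y. f y \<partial>N x) \<in> borel_measurable M"
    using measurable_compose[OF N integral_measurable_subprob_algebra[OF f]] by simp
  have eP: "(\<integral>\<^sup>+ x. ennreal (enn2real (P x)) \<partial>M) = (\<integral>\<^sup>+ x. P x \<partial>M)"
    by (rule nn_integral_cong_AE, rule AE_mp[OF AP], rule AE_I2) (simp add: ennreal_enn2real_if)
  have eQ: "(\<integral>\<^sup>+ x. ennreal (enn2real (Q x)) \<partial>M) = (\<integral>\<^sup>+ x. Q x \<partial>M)"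
    by (rule nn_integral_cong_AE, rule AE_mp[OF AQ], rule AE_I2) (simp add: ennreal_enn2real_if)
  have b1: "(\<integral>\<^sup>+ y. ennreal (f y) \<partial>(M \<bind> N)) = (\<integral>\<^sup>+ x. P x \<partial>M)"
    unfolding P_def by (rule nn_integral_bind[OF _ N]) simp
  have b2: "(\<integral>\<^sup>+ y. ennreal (- f y) \<partial>(M \<bind> N)) = (\<integral>\<^sup>+ x. Q x \<partial>M)"
    unfolding Q_def by (rule nn_integral_bind[OF _ N]) simp
  show "integrable M (\<lambda>x. \<integral>y. f y \<partial>N x)"
    using integrable_cong_AE[OF mI _ eq] iPQ by auto
  have "(\<integral>x. (\<integral>y. f y \<partial>N x) \<partial>M) = (\<integral>x. enn2real (P x) - enn2real (Q x) \<partial>M)"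
    by (rule integral_cong_AE[OF mI _ eq]) simp
  also have "\<dots> = (\<integral>x. enn2real (P x) \<partial>M) - (\<integral>x. enn2real (Q x) \<partial>M)"
    by (rule Bochner_Integration.integral_diff[OF iP iQ])
  also have "(\<integral>x. enn2real (P x) \<partial>M) = enn2real (\<integral>\<^sup>+x. P x \<partial>M)"
    by (subst integral_eq_nn_integral) (auto simp: eP)
  also have "(\<integral>x. enn2real (Q x) \<partial>M) = enn2real (\<integral>\<^sup>+x. Q x \<partial>M)"
    by (subst integral_eq_nn_integral) (auto simp: eQ)
  also have "enn2real (\<integral>\<^sup>+x. P x \<partial>M) - enn2real (\<integral>\<^sup>+x. Q x \<partial>M) = (\<integral>y. f y \<partial>(M \<bind> N))"
    unfolding real_lebesgue_integral_def[OF int] b1 b2 ..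
  finally show "(\<integral>y. f y \<partial>(M \<bind> N)) = (\<integral>x. (\<integral>y. f y \<partial>N x) \<partial>M)" by simp
qed

lemma ae_ex: assumes "prob_space M" "AE x in M. P x" shows "\<exists>x\<in>space M. P x"
proof (rule ccontr)
  assume "\<not> ?thesis"
  then have "AE x in M. False" using assms(2) by (auto elim: AE_mp)
  then have "emeasure M {x\<in>space M. \<not> False} = 0" by (rule AE_E2)
  then show False using prob_space.emeasure_space_1[OF assms(1)] by simp
qed

lemma prob_int_const: "prob_space M \<Longrightarrow> (\<integral>x. c \<partial>M) = (c::real)"
  by (simp add: prob_space.prob_space)

lemma wass_lip:
  fixes g :: "'x::metric_space \<Rightarrow> real"
  assumes a: "prob_space \<alpha>" and b: "prob_space \<beta>"
    and g: "L-lipschitz_on UNIV g" and ia: "integrable \<alpha> g" and ib: "integrable \<beta> g"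
  shows "ennreal \<bar>(\<integral>x. g x \<partial>\<alpha>) - (\<integral>x. g x \<partial>\<beta>)\<bar> \<le> ennreal L * wass \<alpha> \<beta>"
proof (cases "L = 0")
  case True
  then have "g x = g y" for x y using lipschitz_onD[OF g, of x y] by simp
  then have "g = (\<lambda>_. g undefined)" by auto
  then have "(\<integral>x. g x \<partial>\<alpha>) = g undefined" "(\<integral>x. g x \<partial>\<beta>) = g undefined"
    using prob_int_const[OF a] prob_int_const[OF b] by metis+
  then show ?thesis by simp
next
  case False
  then have L: "L > 0" using lipschitz_on_nonneg[OF g] by simp
  define h where "h x = g x / L" for x
  have hl: "1-lipschitz_on UNIV h"
  proof (rule lipschitz_onI)
    fix x y :: 'x
    have "dist (h x) (h y) = dist (g x) (g y) / L" using L
      by (simp add: h_def dist_real_def diff_divide_distrib[symmetric] abs_div)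
    also have "\<dots> \<le> L * dist x y / L" using divide_right_mono[OF lipschitz_onD[OF g, of x y], of L] L by simp
    finally show "dist (h x) (h y) \<le> 1 * dist x y" using L by simp
  qed simp
  have "integrable \<alpha> h" "integrable \<beta> h" unfolding h_def using ia ib by auto
  then have "ennreal \<bar>(\<integral>x. h x \<partial>\<alpha>) - (\<integral>x. h x \<partial>\<beta>)\<bar> \<le> wass \<alpha> \<beta>"
    unfolding wass_def using hl by (intro SUP_upper) auto
  moreover have "\<bar>(\<integral>x. g x \<partial>\<alpha>) - (\<integral>x. g x \<partial>\<beta>)\<bar> = L * \<bar>(\<integral>x. h x \<partial>\<alpha>) - (\<integral>x. h x \<partial>\<beta>)\<bar>"
    using L by (simp add: h_def diff_divide_distrib[symmetric] abs_div abs_of_pos)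
  ultimately show ?thesis using L by (simp add: ennreal_mult mult_left_mono)
qed

lemma min_abs_lip: "\<bar>min (\<bar>a\<bar>) c - min (\<bar>b\<bar>) c\<bar> \<le> \<bar>a - b::real\<bar>"
  by (simp add: min_def abs_if)

lemma sup_min_ennreal: "(SUP n. ennreal (min \<bar>a\<bar> (real n))) = ennreal \<bar>a\<bar>"
proof (rule antisym)
  show "(SUP n. ennreal (min \<bar>a\<bar> (real n))) \<le> ennreal \<bar>a\<bar>"
    by (rule SUP_least) (simp add: ennreal_leI)
  have "min \<bar>a\<bar> (real (nat \<lceil>\<bar>a\<bar>\<rceil>)) = \<bar>a\<bar>"
    using real_nat_ceiling_ge[of "\<bar>a\<bar>"] by simp
  then show "ennreal \<bar>a\<bar> \<le> (SUP n. ennreal (min \<bar>a\<bar> (real n)))"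
    by (intro SUP_upper2[of "nat \<lceil>\<bar>a\<bar>\<rceil>"]) auto
qed

lemma wass_nn:
  fixes g :: "'x::metric_space \<Rightarrow> real"
  assumes a: "prob_space \<alpha>" "sets \<alpha> = sets borel" and b: "prob_space \<beta>" "sets \<beta> = sets borel"
    and g: "L-lipschitz_on UNIV g"
  shows "(\<integral>\<^sup>+x. ennreal \<bar>g x\<bar> \<partial>\<beta>) \<le> (\<integral>\<^sup>+x. ennreal \<bar>g x\<bar> \<partial>\<alpha>) + ennreal L * wass \<alpha> \<beta>"
proof -
  define h where "h n x = min \<bar>g x\<bar> (real n)" for n x
  have hl: "L-lipschitz_on UNIV (h n)" for n
  proof (rule lipschitz_onI)
    fix x y :: 'x
    have "dist (h n x) (h n y) \<le> dist (g x) (g y)"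
      unfolding h_def dist_real_def by (rule min_abs_lip)
    then show "dist (h n x) (h n y) \<le> L * dist x y" using order_trans[OF _ lipschitz_onD[OF g, of x y]] by simp
  qed (rule lipschitz_on_nonneg[OF g])
  have hm: "h n \<in> borel_measurable borel" for n by (rule lip_meas[OF hl])
  have hma: "h n \<in> borel_measurable \<alpha>" "h n \<in> borel_measurable \<beta>" for n
    using hm a b by (simp_all cong: measurable_cong_sets)
  have ih: "integrable \<alpha> (h n)" "integrable \<beta> (h n)" for n
  proof -
    interpret pa: prob_space \<alpha> by (rule a)
    interpret pb: prob_space \<beta> by (rule b)
    show "integrable \<alpha> (h n)" by (rule pa.integrable_const_bound[where B="real n"]) (auto simp: h_def hma)
    show "integrable \<beta> (h n)" by (rule pb.integrable_const_bound[where B="real n"]) (auto simp: h_def hma)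
  qed
  have hnn: "0 \<le> h n x" for n x by (simp add: h_def)
  have step: "(\<integral>\<^sup>+x. ennreal (h n x) \<partial>\<beta>) \<le> (\<integral>\<^sup>+x. ennreal \<bar>g x\<bar> \<partial>\<alpha>) + ennreal L * wass \<alpha> \<beta>" for n
  proof -
    have e1: "(\<integral>\<^sup>+x. ennreal (h n x) \<partial>\<beta>) = ennreal (\<integral>x. h n x \<partial>\<beta>)"
      by (rule nn_integral_eq_integral[OF ih(2)]) (simp add: hnn)
    have e2: "(\<integral>\<^sup>+x. ennreal (h n x) \<partial>\<alpha>) = ennreal (\<integral>x. h n x \<partial>\<alpha>)"
      by (rule nn_integral_eq_integral[OF ih(1)]) (simp add: hnn)
    have "(\<integral>x. h n x \<partial>\<beta>) \<le> (\<integral>x. h n x \<partial>\<alpha>) + \<bar>(\<integral>x. h n x \<partial>\<alpha>) - (\<integral>x. h n x \<partial>\<beta>)\<bar>" by simp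
    then have "ennreal (\<integral>x. h n x \<partial>\<beta>) \<le> ennreal (\<integral>x. h n x \<partial>\<alpha>) + ennreal \<bar>(\<integral>x. h n x \<partial>\<alpha>) - (\<integral>x. h n x \<partial>\<beta>)\<bar>"
      by (metis abs_ge_zero ennreal_leI ennreal_plus integral_nonneg_AE AE_I2 hnn)
    also have "\<dots> \<le> (\<integral>\<^sup>+x. ennreal \<bar>g x\<bar> \<partial>\<alpha>) + ennreal L * wass \<alpha> \<beta>"
    proof (rule add_mono)
      show "ennreal (\<integral>x. h n x \<partial>\<alpha>) \<le> (\<integral>\<^sup>+x. ennreal \<bar>g x\<bar> \<partial>\<alpha>)"
        unfolding e2[symmetric] by (intro nn_integral_mono) (simp add: h_def ennreal_leI)
      show "ennreal \<bar>(\<integral>x. h n x \<partial>\<alpha>) - (\<integral>x. h n x \<partial>\<beta>)\<bar> \<le> ennreal L * wass \<alpha> \<beta>"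
        by (rule wass_lip[OF a(1) b(1) hl ih])
    qed
    finally show ?thesis using e1 by simp
  qed
  have "(\<integral>\<^sup>+x. ennreal \<bar>g x\<bar> \<partial>\<beta>) = (\<integral>\<^sup>+x. (SUP n. ennreal (h n x)) \<partial>\<beta>)"
    by (simp add: h_def sup_min_ennreal)
  also have "\<dots> = (SUP n. (\<integral>\<^sup>+x. ennreal (h n x) \<partial>\<beta>))"
  proof (rule nn_integral_monotone_convergence_SUP)
    show "incseq (\<lambda>n x. ennreal (h n x))"
      by (auto simp: incseq_def le_fun_def h_def intro!: ennreal_leI)
  qed (intro measurable_compose[OF hma(2)] measurable_ennreal)
  also have "\<dots> \<le> (\<integral>\<^sup>+x. ennreal \<bar>g x\<bar> \<partial>\<alpha>) + ennreal L * wass \<alpha> \<beta>"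
    by (rule SUP_least) (rule step)
  finally show ?thesis .
qed

lemma wass_integrable:
  fixes g :: "'x::metric_space \<Rightarrow> real"
  assumes a: "prob_space \<alpha>" "sets \<alpha> = sets borel" and b: "prob_space \<beta>" "sets \<beta> = sets borel"
    and g: "L-lipschitz_on UNIV g" and ia: "integrable \<alpha> g" and w: "wass \<alpha> \<beta> \<noteq> \<top>"
  shows "integrable \<beta> g"
proof -
  have "(\<integral>\<^sup>+x. ennreal \<bar>g x\<bar> \<partial>\<beta>) \<le> (\<integral>\<^sup>+x. ennreal \<bar>g x\<bar> \<partial>\<alpha>) + ennreal L * wass \<alpha> \<beta>"
    by (rule wass_nn[OF a b g])
  also have "\<dots> < \<top>"
    using ia w unfolding integrable_iff_bounded by (simp add: ennreal_mult_less_top less_top)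
  finally show ?thesis
    unfolding integrable_iff_bounded using lip_meas[OF g] b by (simp cong: measurable_cong_sets)
qed

lemma wass_lip2:
  fixes g :: "'x::metric_space \<Rightarrow> real"
  assumes a: "prob_space \<alpha>" "sets \<alpha> = sets borel" and b: "prob_space \<beta>" "sets \<beta> = sets borel"
    and g: "L-lipschitz_on UNIV g" and ia: "integrable \<alpha> g"
  shows "ennreal \<bar>(\<integral>x. g x \<partial>\<alpha>) - (\<integral>x. g x \<partial>\<beta>)\<bar> \<le> ennreal L * wass \<alpha> \<beta>"
proof (cases "L = 0 \<or> wass \<alpha> \<beta> \<noteq> \<top>")
  case True
  have "integrable \<beta> g"
  proof (cases "L = 0")
    case L: True
    then have "g x = g y" for x y using lipschitz_onD[OF g, of x y] by simp
    then have "g = (\<lambda>_. g undefined)" by auto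
    interpret pb: prob_space \<beta> by (rule b)
    show ?thesis by (subst \<open>g = _\<close>) (rule pb.integrable_const)
  next
    case False
    then show ?thesis using True wass_integrable[OF a b g ia] by auto
  qed
  then show ?thesis by (rule wass_lip[OF a(1) b(1) g ia])
next
  case False
  then have "L > 0" using lipschitz_on_nonneg[OF g] by auto
  then show ?thesis using False by (simp add: ennreal_mult_top)
qed

lemma prob_algD: "K \<in> M \<rightarrow>\<^sub>M prob_algebra N \<Longrightarrow> s \<in> space M \<Longrightarrow> prob_space (K s) \<and> sets (K s) = sets N"
  using measurable_space[of K M "prob_algebra N" s] by (simp add: space_prob_algebra)

lemma sk_meas:
  assumes pk: "(\<lambda>(s, a). p s a) \<in> borel \<Otimes>\<^sub>M borel \<rightarrow>\<^sub>M prob_algebra borel"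
    and pik: "\<pi> \<in> borel \<rightarrow>\<^sub>M prob_algebra borel"
  shows "state_kernel p \<pi> \<in> borel \<rightarrow>\<^sub>M prob_algebra borel"
proof -
  have "(\<lambda>s. \<pi> s \<bind> p s) \<in> borel \<rightarrow>\<^sub>M prob_algebra borel"
    by (rule measurable_bind_prob_space2[OF pik pk])
  then show ?thesis unfolding state_kernel_def[abs_def] by simp
qed

lemma kernel_sec:
  assumes pk: "(\<lambda>(s, a). p s a) \<in> borel \<Otimes>\<^sub>M borel \<rightarrow>\<^sub>M prob_algebra borel"
  shows "p s \<in> borel \<rightarrow>\<^sub>M prob_algebra borel"
  using measurable_Pair2[OF pk, of s] by simp

lemma sk_int_all:
  fixes p :: "'s::metric_space \<Rightarrow> 'a::metric_space \<Rightarrow> 's measure" and f :: "'s \<Rightarrow> real"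
  assumes pk: "(\<lambda>(s, a). p s a) \<in> borel \<Otimes>\<^sub>M borel \<rightarrow>\<^sub>M prob_algebra borel"
    and pik: "\<pi> \<in> borel \<rightarrow>\<^sub>M prob_algebra borel"
    and pLC: "config_LC Lp p"
    and f: "L-lipschitz_on UNIV f" and fi: "integrable (state_kernel p \<pi> s) f"
  shows "integrable (p s2 a) f"
proof -
  have fm: "f \<in> borel_measurable borel" by (rule lip_meas[OF f])
  have ps: "p s \<in> borel \<rightarrow>\<^sub>M subprob_algebra borel" by (rule measurable_prob_algebraD[OF kernel_sec[OF pk]])
  have "AE a in \<pi> s. integrable (p s a) f"
    using integral_bind_gen(1)[OF _ fm fi[unfolded state_kernel_def]] ps prob_algD[OF pik, of s]
    by (simp cong: measurable_cong_sets)
  then have "\<exists>a\<in>space (\<pi> s). integrable (p s a) f"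
    by (rule ae_ex[rotated]) (use prob_algD[OF pik, of s] in simp)
  then obtain a0 where "integrable (p s a0) f" by blast
  moreover have "wass (p s a0) (p s2 a) \<noteq> \<top>"
    using pLC[unfolded config_LC_def, rule_format, of s a0 s2 a] by (auto simp: top_unique)
  moreover have P1: "prob_space (p x y) \<and> sets (p x y) = sets borel" for x y
    using prob_algD[OF kernel_sec[OF pk], of y x] by simp
  ultimately show ?thesis
    using wass_integrable[OF conjunct1[OF P1] conjunct2[OF P1] conjunct1[OF P1] conjunct2[OF P1] f] by blast
qed

lemma ennreal_le_real: "ennreal x \<le> ennreal y \<Longrightarrow> 0 \<le> y \<Longrightarrow> x \<le> y"
  by (simp add: ennreal_le_iff)

lemma prob_int_constI: "prob_space M \<Longrightarrow> integrable M (\<lambda>_. c::real)"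
proof -
  assume "prob_space M"
  then interpret prob_space M .
  show ?thesis by simp
qed

lemma sk_lip:
  fixes p :: "'s::metric_space \<Rightarrow> 'a::metric_space \<Rightarrow> 's measure"
  assumes pk: "(\<lambda>(s, a). p s a) \<in> borel \<Otimes>\<^sub>M borel \<rightarrow>\<^sub>M prob_algebra borel"
    and pik: "\<pi> \<in> borel \<rightarrow>\<^sub>M prob_algebra borel"
    and Lp: "0 \<le> Lp" and Lpi: "0 \<le> Lpi"
    and piLC: "policy_LC Lpi \<pi>" and pLC: "config_LC Lp p"
  shows "wass (state_kernel p \<pi> s) (state_kernel p \<pi> s') \<le> ennreal (Lp * (1 + Lpi) * dist s s')"
  unfolding wass_def
proof (rule SUP_least, safe)
  fix f :: "'s \<Rightarrow> real"
  assume f: "1-lipschitz_on UNIV f" and fi: "integrable (state_kernel p \<pi> s) f"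
    and fi': "integrable (state_kernel p \<pi> s') f"
  have fm: "f \<in> borel_measurable borel" by (rule lip_meas[OF f])
  have P1: "prob_space (p x y) \<and> sets (p x y) = sets borel" for x y
    using prob_algD[OF kernel_sec[OF pk], of y x] by simp
  have P2: "prob_space (\<pi> x) \<and> sets (\<pi> x) = sets borel" for x
    using prob_algD[OF pik, of x] by simp
  have ps: "p x \<in> \<pi> y \<rightarrow>\<^sub>M subprob_algebra borel" for x y
    using measurable_prob_algebraD[OF kernel_sec[OF pk]] P2 by (simp cong: measurable_cong_sets)
  have iall: "integrable (p x y) f" for x y by (rule sk_int_all[OF pk pik pLC f fi])
  define g where "g x a = (\<integral>y. f y \<partial>p x a)" for x a
  have gl: "\<bar>g x a - g x2 a2\<bar> \<le> Lp * (dist x x2 + dist a a2)" for x x2 a a2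
  proof -
    have "ennreal \<bar>g x a - g x2 a2\<bar> \<le> ennreal 1 * wass (p x a) (p x2 a2)"
      unfolding g_def by (rule wass_lip[OF conjunct1[OF P1] conjunct1[OF P1] f iall iall])
    also have "\<dots> \<le> ennreal (Lp * (dist x x2 + dist a a2))"
      using pLC unfolding config_LC_def by simp
    finally show ?thesis by (rule ennreal_le_real) (simp add: Lp)
  qed
  have glip: "Lp-lipschitz_on UNIV (g x)" for x
    by (rule lipschitz_onI) (use gl[of x _ x] Lp in \<open>auto simp: dist_real_def\<close>)
  have b1: "integrable (\<pi> x) (g x)" "(\<integral>y. f y \<partial>state_kernel p \<pi> x) = (\<integral>a. g x a \<partial>\<pi> x)"
    if "integrable (state_kernel p \<pi> x) f" for x
    using integral_bind_gen(2,3)[OF ps fm that[unfolded state_kernel_def]] unfolding g_def state_kernel_def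
    by simp_all
  have int_s: "integrable (\<pi> s) (g s)" and int_s': "integrable (\<pi> s') (g s')"
    using b1(1) fi fi' by auto
  have wpi: "wass (\<pi> s') (\<pi> s) \<le> ennreal (Lpi * dist s' s)" "wass (\<pi> s) (\<pi> s') \<le> ennreal (Lpi * dist s s')"
    using piLC unfolding policy_LC_def by auto
  have int_ss': "integrable (\<pi> s) (g s')"
    by (rule wass_integrable[OF conjunct1[OF P2] conjunct2[OF P2] conjunct1[OF P2] conjunct2[OF P2] glip int_s'])
       (use wpi(1) in \<open>auto simp: top_unique\<close>)
  have t1: "\<bar>(\<integral>a. g s a \<partial>\<pi> s) - (\<integral>a. g s' a \<partial>\<pi> s)\<bar> \<le> Lp * dist s s'"
  proof -
    have "\<bar>(\<integral>a. g s a \<partial>\<pi> s) - (\<integral>a. g s' a \<partial>\<pi> s)\<bar> = \<bar>\<integral>a. g s a - g s' a \<partial>\<pi> s\<bar>"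
      using int_s int_ss' by simp
    also have "\<dots> \<le> (\<integral>a. \<bar>g s a - g s' a\<bar> \<partial>\<pi> s)" by (rule integral_abs_bound)
    also have "\<dots> \<le> (\<integral>a. Lp * dist s s' \<partial>\<pi> s)"
      using int_s int_ss' conjunct1[OF P2, of s]
      by (intro integral_mono) (auto simp: prob_int_constI intro: order_trans[OF gl[of s _ s']])
    also have "\<dots> = Lp * dist s s'" by (rule prob_int_const[OF conjunct1[OF P2]])
    finally show ?thesis .
  qed
  have t2: "\<bar>(\<integral>a. g s' a \<partial>\<pi> s) - (\<integral>a. g s' a \<partial>\<pi> s')\<bar> \<le> Lp * (Lpi * dist s s')"
  proof -
    have "ennreal \<bar>(\<integral>a. g s' a \<partial>\<pi> s) - (\<integral>a. g s' a \<partial>\<pi> s')\<bar> \<le> ennreal Lp * wass (\<pi> s) (\<pi> s')"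
      by (rule wass_lip[OF conjunct1[OF P2] conjunct1[OF P2] glip int_ss' int_s'])
    also have "\<dots> \<le> ennreal Lp * ennreal (Lpi * dist s s')"
      by (rule mult_left_mono[OF wpi(2)]) simp
    also have "\<dots> = ennreal (Lp * (Lpi * dist s s'))" using Lp Lpi by (simp add: ennreal_mult)
    finally show ?thesis by (rule ennreal_le_real) (simp add: Lp Lpi)
  qed
  have "\<bar>(\<integral>y. f y \<partial>state_kernel p \<pi> s) - (\<integral>y. f y \<partial>state_kernel p \<pi> s')\<bar>
      = \<bar>(\<integral>a. g s a \<partial>\<pi> s) - (\<integral>a. g s' a \<partial>\<pi> s')\<bar>" using b1(2) fi fi' by simp
  also have "\<dots> \<le> Lp * dist s s' + Lp * (Lpi * dist s s')" using t1 t2 by linarith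
  also have "\<dots> = Lp * (1 + Lpi) * dist s s'" by (simp add: algebra_simps)
  finally show "ennreal \<bar>(\<integral>y. f y \<partial>state_kernel p \<pi> s) - (\<integral>y. f y \<partial>state_kernel p \<pi> s')\<bar>
      \<le> ennreal (Lp * (1 + Lpi) * dist s s')" by (rule ennreal_leI)
qed

definition wts :: "real \<Rightarrow> nat measure" where
  "wts \<gamma> = density (count_space UNIV) (\<lambda>t. ennreal ((1 - \<gamma>) * \<gamma> ^ t))"

lemma sd_prob:
  assumes rho: "\<rho> \<in> space (prob_algebra borel)" and P: "P \<in> borel \<rightarrow>\<^sub>M prob_algebra borel"
  shows "state_dist \<rho> P t \<in> space (prob_algebra borel)"
proof (induction t)
  case 0 then show ?case using rho by simp
next
  case (Suc t)
  then show ?case using prob_space_bind'[OF Suc P] sets_bind'[OF Suc P]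
    by (simp add: space_prob_algebra)
qed

lemma sd_meas:
  assumes rho: "\<rho> \<in> space (prob_algebra borel)" and P: "P \<in> borel \<rightarrow>\<^sub>M prob_algebra borel"
  shows "state_dist \<rho> P \<in> wts \<gamma> \<rightarrow>\<^sub>M subprob_algebra borel"
proof -
  have "state_dist \<rho> P \<in> count_space UNIV \<rightarrow>\<^sub>M subprob_algebra borel"
    using sd_prob[OF rho P] by (auto simp: space_prob_algebra space_subprob_algebra prob_space_imp_subprob_space)
  then show ?thesis unfolding wts_def by (simp cong: measurable_cong_sets)
qed

lemma space_wts[simp]: "space (wts \<gamma>) = UNIV" by (simp add: wts_def)

lemma disc_eq:
  assumes rho: "\<rho> \<in> space (prob_algebra borel)" and P: "P \<in> borel \<rightarrow>\<^sub>M prob_algebra borel"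
  shows "disc_dist \<gamma> \<rho> P = wts \<gamma> \<bind> state_dist \<rho> P"
proof -
  let ?B = "wts \<gamma> \<bind> state_dist \<rho> P"
  have sB: "sets ?B = sets borel" by (rule sets_bind_measurable[OF sd_meas[OF rho P]]) simp
  then have spB: "space ?B = UNIV" using sets_eq_imp_space_eq by fastforce
  have sr: "sets \<rho> = sets borel" using rho by (simp add: space_prob_algebra)
  then have spr: "space \<rho> = UNIV" using sets_eq_imp_space_eq by fastforce
  have em: "emeasure ?B X = (\<Sum>t. ennreal ((1 - \<gamma>) * \<gamma> ^ t) * emeasure (state_dist \<rho> P t) X)"
    if X: "X \<in> sets borel" for X
  proof -
    have "emeasure ?B X = (\<integral>\<^sup>+t. emeasure (state_dist \<rho> P t) X \<partial>wts \<gamma>)"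
      by (rule emeasure_bind[OF _ sd_meas[OF rho P] X]) simp
    also have "\<dots> = (\<integral>\<^sup>+t. ennreal ((1 - \<gamma>) * \<gamma> ^ t) * emeasure (state_dist \<rho> P t) X \<partial>count_space UNIV)"
      unfolding wts_def by (rule nn_integral_density) simp_all
    also have "\<dots> = (\<Sum>t. ennreal ((1 - \<gamma>) * \<gamma> ^ t) * emeasure (state_dist \<rho> P t) X)"
      by (rule nn_integral_count_space_nat)
    finally show ?thesis .
  qed
  have "disc_dist \<gamma> \<rho> P = measure_of UNIV (sets borel) (emeasure ?B)"
    unfolding disc_dist_def spr sr
    by (rule measure_of_eq) (auto simp: em sets.sigma_sets_eq[of borel, simplified])
  also have "\<dots> = ?B" using measure_of_of_measure[of ?B] by (simp add: sB spB)
  finally show ?thesis .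
qed

lemma disc_nn:
  assumes rho: "\<rho> \<in> space (prob_algebra borel)" and P: "P \<in> borel \<rightarrow>\<^sub>M prob_algebra borel"
    and g: "g \<in> borel_measurable borel"
  shows "(\<integral>\<^sup>+x. g x \<partial>disc_dist \<gamma> \<rho> P) = (\<Sum>t. ennreal ((1 - \<gamma>) * \<gamma> ^ t) * (\<integral>\<^sup>+x. g x \<partial>state_dist \<rho> P t))"
proof -
  have "(\<integral>\<^sup>+x. g x \<partial>disc_dist \<gamma> \<rho> P) = (\<integral>\<^sup>+t. (\<integral>\<^sup>+x. g x \<partial>state_dist \<rho> P t) \<partial>wts \<gamma>)"
    unfolding disc_eq[OF rho P] by (rule nn_integral_bind[OF g sd_meas[OF rho P]])
  also have "\<dots> = (\<integral>\<^sup>+t. ennreal ((1 - \<gamma>) * \<gamma> ^ t) * (\<integral>\<^sup>+x. g x \<partial>state_dist \<rho> P t) \<partial>count_space UNIV)"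
    unfolding wts_def by (rule nn_integral_density) simp_all
  also have "\<dots> = (\<Sum>t. ennreal ((1 - \<gamma>) * \<gamma> ^ t) * (\<integral>\<^sup>+x. g x \<partial>state_dist \<rho> P t))"
    by (rule nn_integral_count_space_nat)
  finally show ?thesis .
qed

lemma disc_int:
  fixes f :: "'s::metric_space \<Rightarrow> real"
  assumes rho: "\<rho> \<in> space (prob_algebra borel)" and P: "P \<in> borel \<rightarrow>\<^sub>M prob_algebra borel"
    and f: "f \<in> borel_measurable borel" and g: "0 < \<gamma>" "\<gamma> < 1"
    and fi: "integrable (disc_dist \<gamma> \<rho> P) f"
  shows "integrable (state_dist \<rho> P t) f"
    and "summable (\<lambda>t. norm ((1 - \<gamma>) * \<gamma> ^ t * (\<integral>x. f x \<partial>state_dist \<rho> P t)))"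
    and "(\<integral>x. f x \<partial>disc_dist \<gamma> \<rho> P) = (\<Sum>t. (1 - \<gamma>) * \<gamma> ^ t * (\<integral>x. f x \<partial>state_dist \<rho> P t))"
proof -
  note fi' = fi[unfolded disc_eq[OF rho P]]
  note G = integral_bind_gen[OF sd_meas[OF rho P] f fi']
  have "AE t in count_space UNIV. 0 < ennreal ((1 - \<gamma>) * \<gamma> ^ t) \<longrightarrow> integrable (state_dist \<rho> P t) f"
    using G(1) unfolding wts_def by (subst (asm) AE_density) simp_all
  then show "integrable (state_dist \<rho> P t) f" using g by (simp add: AE_count_space)
  have mI: "(\<lambda>t. \<integral>x. f x \<partial>state_dist \<rho> P t) \<in> borel_measurable (count_space UNIV)" by simp
  have i2: "integrable (count_space UNIV) (\<lambda>t. ((1 - \<gamma>) * \<gamma> ^ t) *\<^sub>R (\<integral>x. f x \<partial>state_dist \<rho> P t))"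
    using G(2) unfolding wts_def using g
    by (subst (asm) integrable_density) simp_all
  then show "summable (\<lambda>t. norm ((1 - \<gamma>) * \<gamma> ^ t * (\<integral>x. f x \<partial>state_dist \<rho> P t)))"
    by (simp add: integrable_count_space_nat_iff)
  have "(\<integral>x. f x \<partial>disc_dist \<gamma> \<rho> P) = (\<integral>t. (\<integral>x. f x \<partial>state_dist \<rho> P t) \<partial>wts \<gamma>)"
    unfolding disc_eq[OF rho P] by (rule G(3))
  also have "\<dots> = (\<integral>t. ((1 - \<gamma>) * \<gamma> ^ t) *\<^sub>R (\<integral>x. f x \<partial>state_dist \<rho> P t) \<partial>count_space UNIV)"
    unfolding wts_def using g by (subst integral_density) simp_all
  also have "\<dots> = (\<Sum>t. (1 - \<gamma>) * \<gamma> ^ t * (\<integral>x. f x \<partial>state_dist \<rho> P t))"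
    using integral_count_space_nat[OF i2] by simp
  finally show "(\<integral>x. f x \<partial>disc_dist \<gamma> \<rho> P) = (\<Sum>t. (1 - \<gamma>) * \<gamma> ^ t * (\<integral>x. f x \<partial>state_dist \<rho> P t))" .
qed

primrec iter :: "('s \<Rightarrow> 's measure) \<Rightarrow> ('s \<Rightarrow> real) \<Rightarrow> nat \<Rightarrow> 's \<Rightarrow> real" where
  "iter Q g 0 = g"
| "iter Q g (Suc j) = (\<lambda>s. \<integral>x. iter Q g j x \<partial>Q s)"

locale msetup =
  fixes \<rho> :: "'s::metric_space measure" and Q P :: "'s \<Rightarrow> 's measure" and K :: real
  assumes rho: "\<rho> \<in> space (prob_algebra borel)"
    and Qm: "Q \<in> borel \<rightarrow>\<^sub>M prob_algebra borel" and Pm: "P \<in> borel \<rightarrow>\<^sub>M prob_algebra borel"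
    and K: "0 \<le> K" and Qlip: "\<And>s s'. wass (Q s) (Q s') \<le> ennreal (K * dist s s')"
    and wm: "(\<lambda>s. wass (Q s) (P s)) \<in> borel_measurable borel"
begin

abbreviation "A \<equiv> state_dist \<rho> P"
abbreviation "B \<equiv> state_dist \<rho> Q"

lemma QP: "prob_space (Q s)" "sets (Q s) = sets borel" "prob_space (P s)" "sets (P s) = sets borel"
  using prob_algD[OF Qm, of s] prob_algD[OF Pm, of s] by auto

lemma AB: "prob_space (A k)" "sets (A k) = sets borel" "prob_space (B k)" "sets (B k) = sets borel"
  using sd_prob[OF rho Pm, of k] sd_prob[OF rho Qm, of k] by (auto simp: space_prob_algebra)

lemma Qsub: "sets M = sets borel \<Longrightarrow> Q \<in> M \<rightarrow>\<^sub>M subprob_algebra borel"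
  using measurable_prob_algebraD[OF Qm] by (simp cong: measurable_cong_sets)

lemma Psub: "sets M = sets borel \<Longrightarrow> P \<in> M \<rightarrow>\<^sub>M subprob_algebra borel"
  using measurable_prob_algebraD[OF Pm] by (simp cong: measurable_cong_sets)

lemma lipm: "L-lipschitz_on UNIV (h::'s\<Rightarrow>real) \<Longrightarrow> sets M = sets borel \<Longrightarrow> h \<in> borel_measurable M"
  using lip_meas by (simp cong: measurable_cong_sets)

lemma intQ_from:
  assumes h: "L-lipschitz_on UNIV (h::'s\<Rightarrow>real)" and hi: "integrable (B (Suc 0)) h"
  shows "integrable (Q s) h"
proof -
  have hi': "integrable (B 0 \<bind> Q) h" using hi by simp
  have "AE x in B 0. integrable (Q x) h"
    using integral_bind_gen(1)[OF Qsub[OF AB(4)[of 0]] lip_meas[OF h] hi'] .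
  then have "AE x in \<rho>. integrable (Q x) h" unfolding state_dist.simps(1) .
  then have "\<exists>x\<in>space \<rho>. integrable (Q x) h" by (rule ae_ex[rotated]) (use AB(1)[of 0] in simp)
  then obtain s0 where s0: "integrable (Q s0) h" by blast
  have "wass (Q s0) (Q s) \<noteq> \<top>" using Qlip[of s0 s] by (auto simp: top_unique)
  then show ?thesis using wass_integrable[OF QP(1,2) QP(1,2) h s0] by blast
qed

lemma iter_B:
  assumes g: "1-lipschitz_on UNIV g" and gi: "\<And>i. integrable (B i) g"
  shows "(K^j)-lipschitz_on UNIV (iter Q g j) \<and> (\<forall>i. integrable (B i) (iter Q g j) \<and> (\<integral>x. iter Q g j x \<partial>B i) = (\<integral>x. g x \<partial>B (i + j)))"
proof (induction j)
  case 0
  then show ?case using g gi by simp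
next
  case (Suc j)
  let ?h = "iter Q g j"
  have L: "(K^j)-lipschitz_on UNIV ?h" and I: "\<And>i. integrable (B i) ?h"
    and E: "\<And>i. (\<integral>x. ?h x \<partial>B i) = (\<integral>x. g x \<partial>B (i + j))" using Suc by auto
  have hm: "?h \<in> borel_measurable borel" by (rule lip_meas[OF L])
  have G: "integrable (B i) (iter Q g (Suc j))" "(\<integral>x. ?h x \<partial>B (Suc i)) = (\<integral>x. iter Q g (Suc j) x \<partial>B i)" for i
    using integral_bind_gen(2,3)[OF Qsub[OF AB(4)[of i]] hm] I[of "Suc i"] by simp_all
  have iQ: "integrable (Q s) ?h" for s by (rule intQ_from[OF L I])
  have "(K^Suc j)-lipschitz_on UNIV (iter Q g (Suc j))"
  proof (rule lipschitz_onI)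
    fix s s' :: 's
    have "ennreal \<bar>(\<integral>x. ?h x \<partial>Q s) - (\<integral>x. ?h x \<partial>Q s')\<bar> \<le> ennreal (K^j) * wass (Q s) (Q s')"
      by (rule wass_lip[OF QP(1) QP(1) L iQ iQ])
    also have "\<dots> \<le> ennreal (K^j) * ennreal (K * dist s s')" by (rule mult_left_mono[OF Qlip]) simp
    also have "\<dots> = ennreal (K^Suc j * dist s s')" using K by (simp add: ennreal_mult[symmetric] mult_ac)
    finally show "dist (iter Q g (Suc j) s) (iter Q g (Suc j) s') \<le> K^Suc j * dist s s'"
      by (simp add: dist_real_def) (rule ennreal_le_real, simp_all add: K)
  qed (simp add: K)
  moreover have "(\<integral>x. iter Q g (Suc j) x \<partial>B i) = (\<integral>x. g x \<partial>B (i + Suc j))" for i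
    using G(2)[of i] E[of "Suc i"] by (simp del: state_dist.simps)
  ultimately show ?case using G(1) by simp
qed


lemma abs_lip: "L-lipschitz_on UNIV (g::'s\<Rightarrow>real) \<Longrightarrow> L-lipschitz_on UNIV (\<lambda>x. \<bar>g x\<bar>)"
  unfolding lipschitz_on_def dist_real_def by (auto intro: order_trans[OF abs_triangle_ineq3])

lemma iter_Q:
  assumes g: "1-lipschitz_on UNIV g" and gi: "\<And>i. integrable (B i) g"
  shows "integrable (Q s) (iter Q g j)"
proof -
  have "integrable (B (Suc 0)) (iter Q g j)" "(K^j)-lipschitz_on UNIV (iter Q g j)" using iter_B[OF g gi, of j] by blast+
  then show ?thesis by (intro intQ_from[of "K^j"])
qed

lemma iter_nonneg:
  assumes "\<And>x. 0 \<le> g x" shows "0 \<le> iter Q g j s"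
  using assms by (induction j arbitrary: s) auto

lemma iter_abs:
  assumes g: "1-lipschitz_on UNIV g" and gi: "\<And>i. integrable (B i) g"
  shows "\<bar>iter Q g j s\<bar> \<le> iter Q (\<lambda>x. \<bar>g x\<bar>) j s"
proof (induction j arbitrary: s)
  case 0 then show ?case by simp
next
  case (Suc j)
  have g': "1-lipschitz_on UNIV (\<lambda>x. \<bar>g x\<bar>)" by (rule abs_lip[OF g])
  have gi': "\<And>i. integrable (B i) (\<lambda>x. \<bar>g x\<bar>)" using gi by auto
  have "\<bar>iter Q g (Suc j) s\<bar> \<le> (\<integral>x. \<bar>iter Q g j x\<bar> \<partial>Q s)" by simp
  also have "\<dots> \<le> (\<integral>x. iter Q (\<lambda>x. \<bar>g x\<bar>) j x \<partial>Q s)"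
    using iter_Q[OF g gi] iter_Q[OF g' gi'] Suc by (intro integral_mono) auto
  finally show ?case by simp
qed

lemma A_int:
  assumes f: "1-lipschitz_on UNIV f" and fi: "\<And>i. integrable (B i) f"
    and fin: "\<And>k. (\<integral>\<^sup>+s. wass (Q s) (P s) \<partial>A k) \<noteq> \<top>"
  shows "integrable (A k) (iter Q (\<lambda>x. \<bar>f x\<bar>) j)"
proof (induction k arbitrary: j)
  have g': "1-lipschitz_on UNIV (\<lambda>x. \<bar>f x\<bar>)" by (rule abs_lip[OF f])
  have gi': "\<And>i. integrable (B i) (\<lambda>x. \<bar>f x\<bar>)" using fi by auto
  note IB = iter_B[OF g' gi']
  case 0
  have "integrable (B 0) (iter Q (\<lambda>x. \<bar>f x\<bar>) j)" using IB[of j] by blast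
  then show ?case by simp
next
  have g': "1-lipschitz_on UNIV (\<lambda>x. \<bar>f x\<bar>)" by (rule abs_lip[OF f])
  have gi': "\<And>i. integrable (B i) (\<lambda>x. \<bar>f x\<bar>)" using fi by auto
  note IB = iter_B[OF g' gi']
  let ?u = "iter Q (\<lambda>x. \<bar>f x\<bar>)"
  case (Suc k)
  have L: "(K^j)-lipschitz_on UNIV (?u j)" using IB by blast
  have nn: "0 \<le> ?u i x" for i x by (rule iter_nonneg) simp
  have iQ: "integrable (Q s) (?u j)" for s by (rule iter_Q[OF g' gi'])
  have pw: "(\<integral>\<^sup>+x. ennreal (?u j x) \<partial>P s) \<le> ennreal (?u (Suc j) s) + ennreal (K^j) * wass (Q s) (P s)" for s
  proof -
    have "(\<integral>\<^sup>+x. ennreal \<bar>?u j x\<bar> \<partial>P s) \<le> (\<integral>\<^sup>+x. ennreal \<bar>?u j x\<bar> \<partial>Q s) + ennreal (K^j) * wass (Q s) (P s)"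
      by (rule wass_nn[OF QP(1,2) QP(3,4) L])
    moreover have "(\<integral>\<^sup>+x. ennreal \<bar>?u j x\<bar> \<partial>Q s) = ennreal (?u (Suc j) s)"
      using nn_integral_eq_integral[OF iQ] nn by simp
    ultimately show ?thesis using nn by simp
  qed
  have "(\<integral>\<^sup>+x. ennreal (?u j x) \<partial>A (Suc k)) = (\<integral>\<^sup>+s. (\<integral>\<^sup>+x. ennreal (?u j x) \<partial>P s) \<partial>A k)"
    unfolding state_dist.simps(2)
    by (rule nn_integral_bind[OF _ Psub[OF AB(2)[of k]]]) (intro measurable_compose[OF lip_meas[OF L]] measurable_ennreal)
  also have "\<dots> \<le> (\<integral>\<^sup>+s. ennreal (?u (Suc j) s) + ennreal (K^j) * wass (Q s) (P s) \<partial>A k)"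
    by (intro nn_integral_mono pw)
  also have "\<dots> = (\<integral>\<^sup>+s. ennreal (?u (Suc j) s) \<partial>A k) + ennreal (K^j) * (\<integral>\<^sup>+s. wass (Q s) (P s) \<partial>A k)"
    using lipm[OF conjunct1[OF IB[of "Suc j"]] AB(2)[of k]] wm AB(2)[of k]
    by (subst nn_integral_add) (auto simp: nn_integral_cmult cong: measurable_cong_sets)
  also have "\<dots> < \<top>"
    using Suc[of "Suc j"] fin[of k] nn unfolding integrable_iff_bounded
    by (simp add: ennreal_mult_less_top less_top)
  finally have fin2: "(\<integral>\<^sup>+x. ennreal (?u j x) \<partial>A (Suc k)) < \<top>" .
  have m: "?u j \<in> borel_measurable (A (Suc k))" by (rule lipm[OF L AB(2)])
  from fin2 show ?case
    by (intro integrableI_nonneg[OF m]) (auto simp: nn simp del: state_dist.simps)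
qed


lemma A_int2:
  assumes f: "1-lipschitz_on UNIV f" and fi: "\<And>i. integrable (B i) f"
    and fin: "\<And>k. (\<integral>\<^sup>+s. wass (Q s) (P s) \<partial>A k) \<noteq> \<top>"
  shows "integrable (A k) (iter Q f j)"
proof (rule Bochner_Integration.integrable_bound[OF A_int[OF f fi fin, of k j]])
  have "(K^j)-lipschitz_on UNIV (iter Q f j)" using iter_B[OF f fi] by blast
  then show "iter Q f j \<in> borel_measurable (A k)" by (rule lipm[OF _ AB(2)])
  show "AE x in A k. norm (iter Q f j x) \<le> norm (iter Q (\<lambda>x. \<bar>f x\<bar>) j x)"
    using iter_abs[OF f fi] by (intro AE_I2) (auto intro: order_trans[OF _ abs_ge_self])
qed

definition "ar k = enn2real (\<integral>\<^sup>+s. wass (Q s) (P s) \<partial>A k)"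

lemma E_step:
  assumes f: "1-lipschitz_on UNIV f" and fi: "\<And>i. integrable (B i) f"
    and fin: "\<And>k. (\<integral>\<^sup>+s. wass (Q s) (P s) \<partial>A k) \<noteq> \<top>"
  shows "\<bar>(\<integral>x. iter Q f (Suc j) x \<partial>A k) - (\<integral>x. iter Q f j x \<partial>A (Suc k))\<bar> \<le> K^j * ar k"
proof -
  let ?h = "iter Q f j"
  have L: "(K^j)-lipschitz_on UNIV ?h" using iter_B[OF f fi] by blast
  have iQ: "integrable (Q s) ?h" for s by (rule iter_Q[OF f fi])
  have hi: "integrable (A k \<bind> P) ?h" using A_int2[OF f fi fin, of "Suc k" j] by simp
  note G = integral_bind_gen(2,3)[OF Psub[OF AB(2)[of k]] lip_meas[OF L] hi]
  have I1: "integrable (A k) (\<lambda>s. \<integral>x. ?h x \<partial>Q s)" using A_int2[OF f fi fin, of k "Suc j"] by simp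
  define d where "d s = (\<integral>x. ?h x \<partial>Q s) - (\<integral>x. ?h x \<partial>P s)" for s
  have Id: "integrable (A k) d" unfolding d_def using I1 G(1) by simp
  have eq: "(\<integral>x. iter Q f (Suc j) x \<partial>A k) - (\<integral>x. iter Q f j x \<partial>A (Suc k)) = (\<integral>s. d s \<partial>A k)"
    using I1 G by (simp add: d_def)
  have pw: "ennreal \<bar>d s\<bar> \<le> ennreal (K^j) * wass (Q s) (P s)" for s
    unfolding d_def by (rule wass_lip2[OF QP(1,2) QP(3,4) L iQ])
  have "ennreal \<bar>\<integral>s. d s \<partial>A k\<bar> \<le> ennreal (\<integral>s. \<bar>d s\<bar> \<partial>A k)"
    by (intro ennreal_leI integral_abs_bound)
  also have "\<dots> = (\<integral>\<^sup>+s. ennreal \<bar>d s\<bar> \<partial>A k)"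
    using Id by (intro nn_integral_eq_integral[symmetric]) auto
  also have "\<dots> \<le> (\<integral>\<^sup>+s. ennreal (K^j) * wass (Q s) (P s) \<partial>A k)"
    by (intro nn_integral_mono pw)
  also have "\<dots> = ennreal (K^j) * (\<integral>\<^sup>+s. wass (Q s) (P s) \<partial>A k)"
    using wm AB(2)[of k] by (intro nn_integral_cmult) (simp cong: measurable_cong_sets)
  also have "\<dots> = ennreal (K^j * ar k)"
    using fin[of k] K unfolding ar_def by (simp add: ennreal_mult ennreal_enn2real_if)
  finally have "\<bar>\<integral>s. d s \<partial>A k\<bar> \<le> K^j * ar k"
    by (rule ennreal_le_real) (simp add: K ar_def enn2real_nonneg)
  then show ?thesis using eq by simp
qed

lemma tele:
  assumes f: "1-lipschitz_on UNIV f" and fi: "\<And>i. integrable (B i) f"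
    and fin: "\<And>k. (\<integral>\<^sup>+s. wass (Q s) (P s) \<partial>A k) \<noteq> \<top>"
  shows "\<bar>(\<integral>x. iter Q f (m + j) x \<partial>A 0) - (\<integral>x. iter Q f j x \<partial>A m)\<bar> \<le> (\<Sum>k<m. K^(m + j - 1 - k) * ar k)"
proof (induction m arbitrary: j)
  case 0 then show ?case by simp
next
  case (Suc m)
  have IH: "\<bar>(\<integral>x. iter Q f (Suc m + j) x \<partial>A 0) - (\<integral>x. iter Q f (Suc j) x \<partial>A m)\<bar> \<le> (\<Sum>k<m. K^(Suc m + j - 1 - k) * ar k)"
    using Suc[of "Suc j"] by simp
  have St: "\<bar>(\<integral>x. iter Q f (Suc j) x \<partial>A m) - (\<integral>x. iter Q f j x \<partial>A (Suc m))\<bar> \<le> K^j * ar m"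
    by (rule E_step[OF f fi fin])
  have "\<bar>(\<integral>x. iter Q f (Suc m + j) x \<partial>A 0) - (\<integral>x. iter Q f j x \<partial>A (Suc m))\<bar>
      \<le> (\<Sum>k<m. K^(Suc m + j - 1 - k) * ar k) + K^j * ar m"
    using IH St by linarith
  also have "\<dots> = (\<Sum>k<Suc m. K^(Suc m + j - 1 - k) * ar k)" by simp
  finally show ?case .
qed

lemma cauchy_term:
  assumes "k \<le> n"
  shows "(1 - \<gamma>) * \<gamma> ^ Suc n * (K^(n - k) * a) = ((1 - \<gamma>) * \<gamma> ^ k * a) * (\<gamma> * (\<gamma> * K) ^ (n - k))"
proof -
  have "\<gamma> ^ Suc n = \<gamma> * (\<gamma> ^ k * \<gamma> ^ (n - k))"
    using assms by (simp add: power_add[symmetric])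
  then show ?thesis unfolding power_mult_distrib by (simp only: ac_simps)
qed

lemma main:
  assumes g: "0 < \<gamma>" "\<gamma> < 1" "\<gamma> * K < 1"
  shows "wass (disc_dist \<gamma> \<rho> Q) (disc_dist \<gamma> \<rho> P)
    \<le> ennreal (\<gamma> / (1 - \<gamma> * K)) * (\<integral>\<^sup>+s. wass (Q s) (P s) \<partial>disc_dist \<gamma> \<rho> P)"
  unfolding wass_def[of "disc_dist \<gamma> \<rho> Q"]
proof (rule SUP_least, safe)
  fix f :: "'s \<Rightarrow> real"
  assume f: "1-lipschitz_on UNIV f" and fiQ: "integrable (disc_dist \<gamma> \<rho> Q) f"
    and fiP: "integrable (disc_dist \<gamma> \<rho> P) f"
  let ?I = "\<integral>\<^sup>+s. wass (Q s) (P s) \<partial>disc_dist \<gamma> \<rho> P"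
  define C where "C = \<gamma> / (1 - \<gamma> * K)"
  have C: "0 < C" using g by (simp add: C_def)
  define c where "c t = (1 - \<gamma>) * \<gamma> ^ t" for t
  have c: "0 < c t" for t using g by (simp add: c_def)
  show "ennreal \<bar>(\<integral>x. f x \<partial>disc_dist \<gamma> \<rho> Q) - (\<integral>x. f x \<partial>disc_dist \<gamma> \<rho> P)\<bar> \<le> ennreal (\<gamma> / (1 - \<gamma> * K)) * ?I"
  proof (cases "?I = \<top>")
    case True
    then show ?thesis using C by (simp add: C_def[symmetric] ennreal_mult_top)
  next
    case False
    have Ieq: "?I = (\<Sum>t. ennreal (c t) * (\<integral>\<^sup>+s. wass (Q s) (P s) \<partial>A t))"
      using disc_nn[OF rho Pm wm, of \<gamma>] by (simp only: c_def)
    have fin: "(\<integral>\<^sup>+s. wass (Q s) (P s) \<partial>A k) \<noteq> \<top>" for k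
    proof -
      have "(\<Sum>t. ennreal (c t) * (\<integral>\<^sup>+s. wass (Q s) (P s) \<partial>A t)) < \<top>"
        using False unfolding Ieq by (rule top.not_eq_extremum[THEN iffD1])
      then have "ennreal (c k) * (\<integral>\<^sup>+s. wass (Q s) (P s) \<partial>A k) < \<top>"
        by (rule ennreal_suminf_lessD)
      then show ?thesis using c[of k] by (auto simp: ennreal_mult_less_top)
    qed
    have aeq: "(\<integral>\<^sup>+s. wass (Q s) (P s) \<partial>A k) = ennreal (ar k)" for k
      using fin[of k] by (simp add: ar_def ennreal_enn2real_if)
    have ar0: "0 \<le> ar k" for k by (simp add: ar_def)
    have ca0: "0 \<le> c t * ar t" for t using c[of t] ar0[of t] by simp
    have Ieq2: "?I = (\<Sum>t. ennreal (c t * ar t))"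
      unfolding Ieq aeq using c ar0 by (simp add: ennreal_mult less_imp_le)
    have sumX: "summable (\<lambda>t. c t * ar t)"
      using False Ieq2 ca0 by (intro summable_suminf_not_top) auto
    define X where "X = (\<Sum>t. c t * ar t)"
    have IX: "?I = ennreal X"
      unfolding Ieq2 X_def using ca0 sumX by (intro suminf_ennreal_eq) (auto intro: summable_sums)
    have fm: "f \<in> borel_measurable borel" by (rule lip_meas[OF f])
    have fiB: "integrable (B i) f" for i by (rule disc_int(1)[OF rho Qm fm g(1,2) fiQ])
    have SB: "summable (\<lambda>t. norm (c t * (\<integral>x. f x \<partial>B t)))"
      "(\<integral>x. f x \<partial>disc_dist \<gamma> \<rho> Q) = (\<Sum>t. c t * (\<integral>x. f x \<partial>B t))"
      unfolding c_def by (rule disc_int(2,3)[OF rho Qm fm g(1,2) fiQ])+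
    have SA: "summable (\<lambda>t. norm (c t * (\<integral>x. f x \<partial>A t)))"
      "(\<integral>x. f x \<partial>disc_dist \<gamma> \<rho> P) = (\<Sum>t. c t * (\<integral>x. f x \<partial>A t))"
      unfolding c_def by (rule disc_int(2,3)[OF rho Pm fm g(1,2) fiP])+
    define S where "S t = (\<Sum>k<t. K^(t - 1 - k) * ar k)" for t
    have dt: "\<bar>(\<integral>x. f x \<partial>B t) - (\<integral>x. f x \<partial>A t)\<bar> \<le> S t" for t
    proof -
      have "(\<integral>x. iter Q f t x \<partial>B 0) = (\<integral>x. f x \<partial>B (0 + t))" using iter_B[OF f fiB] by blast
      then have "(\<integral>x. iter Q f (t + 0) x \<partial>A 0) = (\<integral>x. f x \<partial>B t)" by simp
      then show ?thesis using tele[OF f fiB fin, of t 0] by (simp add: S_def)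
    qed
    define a where "a k = c k * ar k" for k
    define b where "b m = \<gamma> * (\<gamma> * K) ^ m" for m
    have gK: "0 \<le> \<gamma> * K" using g K by simp
    have bs: "b sums (\<gamma> * (1 / (1 - \<gamma> * K)))"
      unfolding b_def by (intro sums_mult geometric_sums) (use gK g in simp)
    have na: "summable (\<lambda>k. norm (a k))" using sumX c ar0 by (simp add: a_def abs_mult less_imp_le)
    have nb: "summable (\<lambda>k. norm (b k))" using bs gK g by (simp add: b_def abs_mult sums_summable)
    have cp: "(\<lambda>n. \<Sum>i\<le>n. a i * b (n - i)) sums ((\<Sum>k. a k) * (\<Sum>k. b k))"
      by (rule Cauchy_product_sums[OF na nb])
    have cs: "c (Suc n) * S (Suc n) = (\<Sum>i\<le>n. a i * b (n - i))" for n
    proof -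
      have "c (Suc n) * S (Suc n) = (\<Sum>k\<le>n. c (Suc n) * (K^(n - k) * ar k))"
        by (simp add: S_def sum_distrib_left lessThan_Suc_atMost)
      also have "\<dots> = (\<Sum>i\<le>n. a i * b (n - i))"
        by (rule sum.cong[OF refl]) (unfold c_def a_def b_def, rule cauchy_term, simp)
      finally show ?thesis .
    qed
    have CS: "(\<lambda>t. c t * S t) sums (X * C)"
    proof -
      have "(\<lambda>n. c (Suc n) * S (Suc n)) sums (X * C)"
        using cp unfolding cs[symmetric] X_def a_def[symmetric] sums_unique[OF bs, symmetric]
        by (simp add: C_def)
      then show ?thesis by (subst (asm) sums_Suc_iff) (simp add: S_def)
    qed
    have S0: "0 \<le> S t" for t unfolding S_def using K ar0 by (intro sum_nonneg) simp
    define x where "x t = c t * (\<integral>x. f x \<partial>B t) - c t * (\<integral>x. f x \<partial>A t)" for t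
    have xb: "\<bar>x t\<bar> \<le> c t * S t" for t
      using mult_left_mono[OF dt[of t] less_imp_le[OF c[of t]]] c[of t]
      by (simp add: x_def right_diff_distrib[symmetric] abs_mult)
    have sx: "summable (\<lambda>t. \<bar>x t\<bar>)"
      by (rule summable_comparison_test[OF _ sums_summable[OF CS]]) (use xb in auto)
    have "(\<integral>x. f x \<partial>disc_dist \<gamma> \<rho> Q) - (\<integral>x. f x \<partial>disc_dist \<gamma> \<rho> P) = (\<Sum>t. x t)"
      unfolding SB(2) SA(2) x_def
      by (rule suminf_diff[OF summable_norm_cancel[OF SB(1)] summable_norm_cancel[OF SA(1)]])
    then have "\<bar>(\<integral>x. f x \<partial>disc_dist \<gamma> \<rho> Q) - (\<integral>x. f x \<partial>disc_dist \<gamma> \<rho> P)\<bar> \<le> (\<Sum>t. \<bar>x t\<bar>)"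
      using summable_rabs[OF sx] by simp
    also have "\<dots> \<le> (\<Sum>t. c t * S t)"
      by (rule suminf_le[OF xb sx sums_summable[OF CS]])
    also have "\<dots> = X * C" by (rule sums_unique[OF CS, symmetric])
    finally have "ennreal \<bar>(\<integral>x. f x \<partial>disc_dist \<gamma> \<rho> Q) - (\<integral>x. f x \<partial>disc_dist \<gamma> \<rho> P)\<bar> \<le> ennreal (C * X)"
      by (intro ennreal_leI) (simp add: mult.commute)
    also have "\<dots> = ennreal C * ?I"
      using C sumX ca0 unfolding IX X_def by (intro ennreal_mult) (auto intro!: suminf_nonneg)
    finally show ?thesis by (simp add: C_def)
  qed
qed
end

lemma disc0: "disc_dist 0 \<rho> P = disc_dist 0 \<rho> P'"
proof -
  have e: "(\<Sum>t. ennreal ((1 - 0) * (0::real) ^ t) * emeasure (state_dist \<rho> X t) A) = emeasure \<rho> A" for X A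
  proof -
    have "(\<lambda>t. ennreal ((1 - 0) * (0::real) ^ t) * emeasure (state_dist \<rho> X t) A)
        = (\<lambda>t. if t = 0 then emeasure (state_dist \<rho> X t) A else 0)"
      by (rule ext) simp
    then show ?thesis using sums_unique[OF sums_single[of 0 "\<lambda>t. emeasure (state_dist \<rho> X t) A"]] by simp
  qed
  show ?thesis unfolding disc_dist_def e ..
qed

theorem theorem1:
  fixes \<rho> :: "'s::metric_space measure"
    and p p' :: "'s \<Rightarrow> 'a::metric_space \<Rightarrow> 's measure"
    and \<pi> \<pi>' :: "'s \<Rightarrow> 'a measure"
    and \<gamma> L\<^sub>p L\<^sub>\<pi> :: real
  assumes gamma: "0 \<le> \<gamma>" "\<gamma> < 1"
    and rho: "\<rho> \<in> space (prob_algebra borel)"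
    and p_kernel: "(\<lambda>(s, a). p s a) \<in> borel \<Otimes>\<^sub>M borel \<rightarrow>\<^sub>M prob_algebra borel"
    and p'_kernel: "(\<lambda>(s, a). p' s a) \<in> borel \<Otimes>\<^sub>M borel \<rightarrow>\<^sub>M prob_algebra borel"
    and pi_kernel: "\<pi> \<in> borel \<rightarrow>\<^sub>M prob_algebra borel"
    and pi'_kernel: "\<pi>' \<in> borel \<rightarrow>\<^sub>M prob_algebra borel"
    and Lnonneg: "0 \<le> L\<^sub>p" "0 \<le> L\<^sub>\<pi>"
    and pi'_LC: "policy_LC L\<^sub>\<pi> \<pi>'"
    and p'_LC: "config_LC L\<^sub>p p'"
    and contr: "\<gamma> * L\<^sub>p * (1 + L\<^sub>\<pi>) < 1"
    and meas: "(\<lambda>s. wass (state_kernel p' \<pi>' s) (state_kernel p \<pi> s)) \<in> borel_measurable borel"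
  shows "wass (disc_dist \<gamma> \<rho> (state_kernel p' \<pi>')) (disc_dist \<gamma> \<rho> (state_kernel p \<pi>))
         \<le> ennreal (\<gamma> / (1 - \<gamma> * L\<^sub>p * (1 + L\<^sub>\<pi>)))
            * (\<integral>\<^sup>+ s. wass (state_kernel p' \<pi>' s) (state_kernel p \<pi> s) \<partial>(disc_dist \<gamma> \<rho> (state_kernel p \<pi>)))"
proof (cases "\<gamma> = 0")
  case True
  have "wass (disc_dist \<gamma> \<rho> (state_kernel p' \<pi>')) (disc_dist \<gamma> \<rho> (state_kernel p \<pi>)) \<le> 0"
    unfolding True disc0[of \<rho> "state_kernel p' \<pi>'" "state_kernel p \<pi>"] wass_def
    by (rule SUP_least) simp
  then show ?thesis by simp
next
  case False
  then have g0: "0 < \<gamma>" using gamma by simp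
  interpret msetup \<rho> "state_kernel p' \<pi>'" "state_kernel p \<pi>" "L\<^sub>p * (1 + L\<^sub>\<pi>)"
  proof
    show "\<rho> \<in> space (prob_algebra borel)" by (rule rho)
    show "state_kernel p' \<pi>' \<in> borel \<rightarrow>\<^sub>M prob_algebra borel" by (rule sk_meas[OF p'_kernel pi'_kernel])
    show "state_kernel p \<pi> \<in> borel \<rightarrow>\<^sub>M prob_algebra borel" by (rule sk_meas[OF p_kernel pi_kernel])
    show "0 \<le> L\<^sub>p * (1 + L\<^sub>\<pi>)" using Lnonneg by simp
    show "wass (state_kernel p' \<pi>' s) (state_kernel p' \<pi>' s') \<le> ennreal (L\<^sub>p * (1 + L\<^sub>\<pi>) * dist s s')" for s s'
      by (rule sk_lip[OF p'_kernel pi'_kernel Lnonneg pi'_LC p'_LC])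
    show "(\<lambda>s. wass (state_kernel p' \<pi>' s) (state_kernel p \<pi> s)) \<in> borel_measurable borel" by (rule meas)
  qed
  have "\<gamma> * (L\<^sub>p * (1 + L\<^sub>\<pi>)) < 1" using contr by (simp add: mult.assoc)
  from main[OF g0 gamma(2) this] show ?thesis by (simp add: mult.assoc)
qed

end
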